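(* Fix a mode index $n$. Let $J_{1,n}$ be a complex structure on $\mathcal S_n^R$ that is positive with respect to $W$. Define $J_n=J_{1,n}\otimes I_{2,n}$ on $\mathcal H_n^R$, where $I_{2,n}$ is the identity on $\mathcal E_n^R$; concretely, for any basis $\{E_a\}$ of $\mathcal E_n$, $J_n\sum_a f_aE_a=\sum_a(J_{1,n}f_a)E_a$. Then: (i) $J_n$ is a complex structure on $\mathcal H_n^R$; (ii) $J_n$ is positive with respect to $w$; (iii) $J_n$ is invariant under the structural isometries, i.e. it commutes with the action $T(f(x^A)F(x^j))=f(x^A)\,(TF)(x^j)$ of every isometry $T$ of $(V_2,\gamma)$.
   Context: Setting: $V=V_1\times V_2$ with metric $g=\alpha\oplus(-S)\gamma$. - $(V_1,\alpha)$ is a $p$-dimensional Lorentzian manifold with coordinates $x^A$. - $(V_2,\gamma)$ is a $q$-dimensional compact connected Riemannian manifold with coordinates $x^i$. - $S>0$ is a smooth function on $V_1$. - Standing assumption: either $(V_1,\alpha)\approx\mathbb R\times(\text{compact})$, or $(V_1,\alpha)$ is globally hyperbolic and the solutions considered on $V_1$ arise from compactly supported Cauchy data. This makes the integrals below finite. Klein–Gordon equation and modes: - The Klein–Gordon equation is $(\nabla^2+m^2)\psi=0$ for $g$. - $\Delta_2$ is the Laplacian of $\gamma$, and $\lambda_n$ is the $n$-th eigenvalue of $-\Delta_2$. - $\mathcal E_n$ is the (finite-dimensional) eigenspace of $\lambda_n$, with positive scalar product $\langle F,H\rangle_2=\int_{V_2}F^*H\sqrt\gamma\,d^qx$. $\mathcal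 E_n^R$ denotes its real elements. - The mode space $\mathcal H_n$ consists of the solutions of the Klein–Gordon equation with $-\Delta_2\Phi=\lambda_n\Phi$. $\mathcal H_n^R$ denotes its real elements. - $\mathcal S_n$ (resp. $\mathcal S_n^R$) is the space of complex (resp. real) smooth functions $f$ on $V_1$ solving $(\Delta_1^\sharp+\lambda_nS^{-1}+m^2)f=0$, where $\Delta_1^\sharp f=|\alpha|^{-1/2}S^{-q/2}\partial_A(|\alpha|^{1/2}S^{q/2}\alpha^{AB}\partial_Bf)$. - One has $\mathcal H_n=\mathcal S_n\otimes\mathcal E_n$: every $\Phi\in\mathcal H_n$ is $\sum_af_aE_a$ with $f_a\in\mathcal S_n$ and $\{E_a\}$ a real orthonormal basis of $\mathcal E_n$. Skew forms: - On $\mathcal S_n^R$: $W(f,h)=\int_LS^{q/2}(f\alpha^{AB}\partial_Bh-h\alpha^{AB}\partial_Bf)\,dL_A$, where $L$ is any spacelike $(p-1)$-surface in $V_1$. This is independent of $L$. - $w$ is the restriction to $\mathcal H_n$ of $\varpi(\phi,\psi)=\int_\Sigma(\phi\nabla^\mu\psi-\psi\nabla^\mu\phi)\,d\Sigma_\mu$. - These forms satisfy $w(fF,hH)=W(f,h)\langle F,H\rangle_2$. Complex structures: - A complex structure is a real linear operator $J$ with $J^2=-1$. - $J$ is positive with respect to a skew form $w$ if $w(J\Phi,J\Psi)=w(\Phi,\Psi)$ for all $\Phi,\Psi$, and $w(\Phi,J\Phi)>0$ for all $\Phi\ne0$. *)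

theory Defs
  imports Complex_Main
begin

definition lcomb :: "real \<Rightarrow> ('a \<Rightarrow> real) \<Rightarrow> real \<Rightarrow> ('a \<Rightarrow> real) \<Rightarrow> ('a \<Rightarrow> real)" where
  "lcomb a f b g = (\<lambda>x. a * f x + b * g x)"

definition fun_subspace :: "('a \<Rightarrow> real) set \<Rightarrow> bool" where
  "fun_subspace V \<longleftrightarrow> (\<lambda>_. 0) \<in> V \<and> (\<forall>f\<in>V. \<forall>g\<in>V. \<forall>a b. lcomb a f b g \<in> V)"

definition lin_on :: "('a \<Rightarrow> real) set \<Rightarrow> (('a \<Rightarrow> real) \<Rightarrow> ('b \<Rightarrow> real)) \<Rightarrow> bool" where
  "lin_on V L \<longleftrightarrow> (\<forall>f\<in>V. \<forall>g\<in>V. \<forall>a b. L (lcomb a f b g) = lcomb a (L f) b (L g))"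

definition bilin_on :: "('a \<Rightarrow> real) set \<Rightarrow> (('a \<Rightarrow> real) \<Rightarrow> ('a \<Rightarrow> real) \<Rightarrow> real) \<Rightarrow> bool" where
  "bilin_on V B \<longleftrightarrow>
     (\<forall>f\<in>V. \<forall>g\<in>V. \<forall>h\<in>V. \<forall>a b.
        B (lcomb a f b g) h = a * B f h + b * B g h \<and>
        B h (lcomb a f b g) = a * B h f + b * B h g)"

definition skew_form_on :: "('a \<Rightarrow> real) set \<Rightarrow> (('a \<Rightarrow> real) \<Rightarrow> ('a \<Rightarrow> real) \<Rightarrow> real) \<Rightarrow> bool" where
  "skew_form_on V B \<longleftrightarrow> bilin_on V B \<and> (\<forall>f\<in>V. \<forall>g\<in>V. B f g = - B g f)"

definition complex_structure_on :: "('a \<Rightarrow> real) set \<Rightarrow> (('a \<Rightarrow> real) \<Rightarrow> ('a \<Rightarrow> real)) \<Rightarrow> bool" where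
  "complex_structure_on V J \<longleftrightarrow>
     lin_on V J \<and> (\<forall>f\<in>V. J f \<in> V \<and> J (J f) = (\<lambda>x. - f x))"

definition positive_wrt :: "('a \<Rightarrow> real) set \<Rightarrow> (('a \<Rightarrow> real) \<Rightarrow> ('a \<Rightarrow> real) \<Rightarrow> real)
     \<Rightarrow> (('a \<Rightarrow> real) \<Rightarrow> ('a \<Rightarrow> real)) \<Rightarrow> bool" where
  "positive_wrt V B J \<longleftrightarrow>
     (\<forall>f\<in>V. \<forall>g\<in>V. B (J f) (J g) = B f g) \<and>
     (\<forall>f\<in>V. f \<noteq> (\<lambda>_. 0) \<longrightarrow> B f (J f) > 0)"

definition prodf :: "('p \<Rightarrow> real) \<Rightarrow> ('q \<Rightarrow> real) \<Rightarrow> ('p \<times> 'q \<Rightarrow> real)" where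
  "prodf f F = (\<lambda>(x, y). f x * F y)"

text \<open>The real tensor product S (x) E realised as functions on V1 x V2:
  all finite sums of products f F with f in S, F in E.\<close>
definition tensor_space :: "('p \<Rightarrow> real) set \<Rightarrow> ('q \<Rightarrow> real) set \<Rightarrow> ('p \<times> 'q \<Rightarrow> real) set" where
  "tensor_space S E = {\<Phi>. \<exists>(I::nat set) f F. finite I \<and> (\<forall>i\<in>I. f i \<in> S \<and> F i \<in> E) \<and>
                          \<Phi> = (\<lambda>z. \<Sum>i\<in>I. prodf (f i) (F i) z)}"

definition orthonormal_basis :: "('q \<Rightarrow> real) set \<Rightarrow> (('q \<Rightarrow> real) \<Rightarrow> ('q \<Rightarrow> real) \<Rightarrow> real)
     \<Rightarrow> ('q \<Rightarrow> real) set \<Rightarrow> bool" where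
  "orthonormal_basis E ip B \<longleftrightarrow> finite B \<and> B \<subseteq> E \<and>
     (\<forall>a\<in>B. \<forall>b\<in>B. ip a b = (if a = b then 1 else 0)) \<and>
     (\<forall>F\<in>E. \<exists>c. F = (\<lambda>y. \<Sum>b\<in>B. c b * b y))"

text \<open>J_n = J_{1,n} (x) I_{2,n}: writing Phi = sum_a f_a E_a over the basis B,
  J_n Phi = sum_a (J_{1,n} f_a) E_a.\<close>
definition tensor_J :: "('p \<Rightarrow> real) set \<Rightarrow> ('q \<Rightarrow> real) set \<Rightarrow> (('p \<Rightarrow> real) \<Rightarrow> ('p \<Rightarrow> real))
     \<Rightarrow> ('p \<times> 'q \<Rightarrow> real) \<Rightarrow> ('p \<times> 'q \<Rightarrow> real)" where
  "tensor_J S B J1 \<Phi> =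
     (let c = (SOME c. (\<forall>b\<in>B. c b \<in> S) \<and> \<Phi> = (\<lambda>z. \<Sum>b\<in>B. prodf (c b) b z))
      in (\<lambda>z. \<Sum>b\<in>B. prodf (J1 (c b)) b z))"

text \<open>Action of a point map T of V2 on functions on V1 x V2:
  T(f(x^A) F(x^j)) = f(x^A) (TF)(x^j), with (TF) = F o T^{-1}.\<close>
definition act2 :: "('q \<Rightarrow> 'q) \<Rightarrow> ('p \<times> 'q \<Rightarrow> real) \<Rightarrow> ('p \<times> 'q \<Rightarrow> real)" where
  "act2 T \<Phi> = (\<lambda>(x, y). \<Phi> (x, inv T y))"

end

theory Submission
  imports Defs
begin

lemma lcomb_zero: "lcomb 0 f 0 g = (\<lambda>_. 0)" by (simp add: lcomb_def)

lemma sum_in: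
  assumes V: "fun_subspace V" and fin: "finite I" and f: "\<forall>i\<in>I. f i \<in> V"
  shows "(\<lambda>x. \<Sum>i\<in>I. a i * f i x) \<in> V"
  using fin f
proof (induction I rule: finite_induct)
  case empty then show ?case using V by (simp add: fun_subspace_def)
next
  case (insert j I)
  then have r: "(\<lambda>x. \<Sum>i\<in>I. a i * f i x) \<in> V" "f j \<in> V" by auto
  have "(\<lambda>x. \<Sum>i\<in>insert j I. a i * f i x) = lcomb (a j) (f j) 1 (\<lambda>x. \<Sum>i\<in>I. a i * f i x)"
    using insert by (simp add: lcomb_def)
  then show ?case using V r by (simp add: fun_subspace_def)
qed

lemma bilin_sum_left:
  assumes V: "fun_subspace V" and Bf: "bilin_on V Bf" and fin: "finite I" and f: "\<forall>i\<in>I. f i \<in> V"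
    and h: "h \<in> V"
  shows "Bf (\<lambda>x. \<Sum>i\<in>I. a i * f i x) h = (\<Sum>i\<in>I. a i * Bf (f i) h)"
  using fin f
proof (induction I rule: finite_induct)
  case empty
  have z: "(\<lambda>_. 0) \<in> V" using V by (simp add: fun_subspace_def)
  have "Bf (lcomb 0 (\<lambda>_. 0) 0 (\<lambda>_. 0)) h = 0 * Bf (\<lambda>_. 0) h + 0 * Bf (\<lambda>_. 0) h"
    using Bf z h unfolding bilin_on_def by blast
  then show ?case by (simp add: lcomb_zero)
next
  case (insert j I)
  then have r: "(\<lambda>x. \<Sum>i\<in>I. a i * f i x) \<in> V" "f j \<in> V" using sum_in[OF V] by auto
  have e: "(\<lambda>x. \<Sum>i\<in>insert j I. a i * f i x) = lcomb (a j) (f j) 1 (\<lambda>x. \<Sum>i\<in>I. a i * f i x)"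
    using insert by (simp add: lcomb_def)
  have "Bf (lcomb (a j) (f j) 1 (\<lambda>x. \<Sum>i\<in>I. a i * f i x)) h = a j * Bf (f j) h + 1 * Bf (\<lambda>x. \<Sum>i\<in>I. a i * f i x) h"
    using Bf r h unfolding bilin_on_def by blast
  then show ?case using insert e by simp
qed

lemma bilin_sum_right:
  assumes V: "fun_subspace V" and Bf: "bilin_on V Bf" and fin: "finite I" and f: "\<forall>i\<in>I. f i \<in> V"
    and h: "h \<in> V"
  shows "Bf h (\<lambda>x. \<Sum>i\<in>I. a i * f i x) = (\<Sum>i\<in>I. a i * Bf h (f i))"
  using fin f
proof (induction I rule: finite_induct)
  case empty
  have z: "(\<lambda>_. 0) \<in> V" using V by (simp add: fun_subspace_def)
  have "Bf h (lcomb 0 (\<lambda>_. 0) 0 (\<lambda>_. 0)) = 0 * Bf h (\<lambda>_. 0) + 0 * Bf h (\<lambda>_. 0)"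
    using Bf z h unfolding bilin_on_def by blast
  then show ?case by (simp add: lcomb_zero)
next
  case (insert j I)
  then have r: "(\<lambda>x. \<Sum>i\<in>I. a i * f i x) \<in> V" "f j \<in> V" using sum_in[OF V] by auto
  have e: "(\<lambda>x. \<Sum>i\<in>insert j I. a i * f i x) = lcomb (a j) (f j) 1 (\<lambda>x. \<Sum>i\<in>I. a i * f i x)"
    using insert by (simp add: lcomb_def)
  have "Bf h (lcomb (a j) (f j) 1 (\<lambda>x. \<Sum>i\<in>I. a i * f i x)) = a j * Bf h (f j) + 1 * Bf h (\<lambda>x. \<Sum>i\<in>I. a i * f i x)"
    using Bf r h unfolding bilin_on_def by blast
  then show ?case using insert e by simp
qed

lemma lin_sum:
  assumes V: "fun_subspace V" and L: "lin_on V L" and fin: "finite I" and f: "\<forall>i\<in>I. f i \<in> V"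
  shows "L (\<lambda>x. \<Sum>i\<in>I. a i * f i x) = (\<lambda>x. \<Sum>i\<in>I. a i * L (f i) x)"
  using fin f
proof (induction I rule: finite_induct)
  case empty
  have z: "(\<lambda>_. 0) \<in> V" using V by (simp add: fun_subspace_def)
  have "L (lcomb 0 (\<lambda>_. 0) 0 (\<lambda>_. 0)) = lcomb 0 (L (\<lambda>_. 0)) 0 (L (\<lambda>_. 0))"
    using L z unfolding lin_on_def by blast
  then show ?case by (simp add: lcomb_zero)
next
  case (insert j I)
  then have r: "(\<lambda>x. \<Sum>i\<in>I. a i * f i x) \<in> V" "f j \<in> V" using sum_in[OF V] by auto
  have e: "(\<lambda>x. \<Sum>i\<in>insert j I. a i * f i x) = lcomb (a j) (f j) 1 (\<lambda>x. \<Sum>i\<in>I. a i * f i x)"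
    using insert by (simp add: lcomb_def)
  have "L (lcomb (a j) (f j) 1 (\<lambda>x. \<Sum>i\<in>I. a i * f i x)) = lcomb (a j) (L (f j)) 1 (L (\<lambda>x. \<Sum>i\<in>I. a i * f i x))"
    using L r unfolding lin_on_def by blast
  then show ?case using insert e by (simp add: lcomb_def)
qed

definition expd :: "('q\<Rightarrow>real) set \<Rightarrow> (('q\<Rightarrow>real) \<Rightarrow> ('p\<Rightarrow>real)) \<Rightarrow> ('p\<times>'q\<Rightarrow>real)" where
  "expd B c = (\<lambda>z. \<Sum>b\<in>B. prodf (c b) b z)"

lemma expd_unique:
  assumes E: "fun_subspace E" and ipb: "bilin_on E ip" and onb: "orthonormal_basis E ip B"
    and eq: "expd B c = expd B d" and b0: "b0 \<in> B"
  shows "c b0 = d b0"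
proof
  fix x
  have fin: "finite B" and BE: "B \<subseteq> E" and on: "\<forall>a\<in>B. \<forall>b\<in>B. ip a b = (if a = b then 1 else 0)"
    using onb by (auto simp: orthonormal_basis_def)
  have "\<And>y. expd B c (x,y) = expd B d (x,y)" using eq by simp
  then have "\<And>y. (\<Sum>b\<in>B. (c b x - d b x) * b y) = 0"
    by (simp add: expd_def prodf_def left_diff_distrib sum_subtractf)
  then have G0: "(\<lambda>y. \<Sum>b\<in>B. (c b x - d b x) * b y) = (\<lambda>_. 0)" by auto
  have z: "(\<lambda>_. 0) \<in> E" using E by (simp add: fun_subspace_def)
  have "ip (\<lambda>_. 0) b0 = ip (lcomb 0 (\<lambda>_. 0) 0 (\<lambda>_. 0)) b0" by (simp add: lcomb_zero)
  also have "\<dots> = 0" using ipb z b0 BE unfolding bilin_on_def by auto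
  finally have "0 = ip (\<lambda>y. \<Sum>b\<in>B. (c b x - d b x) * b y) b0" using G0 by simp
  also have "\<dots> = (\<Sum>b\<in>B. (c b x - d b x) * ip b b0)"
    using bilin_sum_left[OF E ipb fin, where f="\<lambda>b. b" and h=b0 and a="\<lambda>b. c b x - d b x"] BE b0 by auto
  also have "\<dots> = (\<Sum>b\<in>B. if b = b0 then c b x - d b x else 0)"
    by (rule sum.cong) (use on b0 in auto)
  also have "\<dots> = c b0 x - d b0 x" using fin b0 by simp
  finally show "c b0 x = d b0 x" by simp
qed

lemma expd_exists:
  assumes S: "fun_subspace S" and onb: "orthonormal_basis E ip B"
    and P: "\<Phi> \<in> tensor_space S E"
  shows "\<exists>c. (\<forall>b\<in>B. c b \<in> S) \<and> \<Phi> = expd B c"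
proof -
  have fin: "finite B" using onb by (auto simp: orthonormal_basis_def)
  obtain I :: "nat set" and f F where I: "finite I" and fF: "\<forall>i\<in>I. f i \<in> S \<and> F i \<in> E"
    and Pe: "\<Phi> = (\<lambda>z. \<Sum>i\<in>I. prodf (f i) (F i) z)"
    using P unfolding tensor_space_def by blast
  have "\<forall>i\<in>I. \<exists>d. F i = (\<lambda>y. \<Sum>b\<in>B. d b * b y)"
    using fF onb unfolding orthonormal_basis_def by blast
  then obtain d where d: "\<forall>i\<in>I. F i = (\<lambda>y. \<Sum>b\<in>B. d i b * b y)" by metis
  define c where "c = (\<lambda>b x. \<Sum>i\<in>I. d i b * f i x)"
  have cS: "\<forall>b\<in>B. c b \<in> S" unfolding c_def using sum_in[OF S I] fF by auto
  have "\<Phi> = expd B c"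
  proof
    fix z :: "'a \<times> 'b"
    obtain x y where z: "z = (x,y)" by (cases z)
    have "\<Phi> z = (\<Sum>i\<in>I. f i x * (\<Sum>b\<in>B. d i b * b y))"
      using d by (simp add: Pe z prodf_def)
    also have "\<dots> = (\<Sum>i\<in>I. \<Sum>b\<in>B. d i b * f i x * b y)"
      by (simp add: sum_distrib_left mult.commute mult.left_commute)
    also have "\<dots> = (\<Sum>b\<in>B. \<Sum>i\<in>I. d i b * f i x * b y)"
      by (rule sum.swap)
    also have "\<dots> = expd B c z"
      by (simp add: expd_def z prodf_def c_def sum_distrib_right)
    finally show "\<Phi> z = expd B c z" .
  qed
  then show ?thesis using cS by blast
qed

lemma expd_in:
  assumes onb: "orthonormal_basis E ip B" and c: "\<forall>b\<in>B. c b \<in> S"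
  shows "expd B c \<in> tensor_space S E"
proof -
  have fin: "finite B" and BE: "B \<subseteq> E" using onb by (auto simp: orthonormal_basis_def)
  obtain h where h: "bij_betw h {0..<card B} B" using ex_bij_betw_nat_finite[OF fin] by blast
  have "expd B c = (\<lambda>z. \<Sum>i\<in>{0..<card B}. prodf (c (h i)) (h i) z)"
  proof
    fix z
    show "expd B c z = (\<Sum>i\<in>{0..<card B}. prodf (c (h i)) (h i) z)"
      unfolding expd_def by (rule sum.reindex_bij_betw[OF h, symmetric])
  qed
  moreover have "\<forall>i\<in>{0..<card B}. c (h i) \<in> S \<and> h i \<in> E"
  proof
    fix i assume "i \<in> {0..<card B}"
    then have "h i \<in> B" by (rule bij_betw_apply[OF h])
    then show "c (h i) \<in> S \<and> h i \<in> E" using c BE by auto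
  qed
  ultimately show ?thesis unfolding tensor_space_def
    by (intro CollectI exI[where x="{0..<card B}"] exI[where x="\<lambda>i. c (h i)"] exI[where x=h]) simp
qed

lemma expd_lcomb:
  "lcomb a (expd B c) b (expd B d) = expd B (\<lambda>\<beta>. lcomb a (c \<beta>) b (d \<beta>))"
proof
  fix z :: "'a \<times> 'b"
  obtain x y where z: "z = (x,y)" by (cases z)
  show "lcomb a (expd B c) b (expd B d) z = expd B (\<lambda>\<beta>. lcomb a (c \<beta>) b (d \<beta>)) z"
    unfolding z lcomb_def expd_def prodf_def
    by (simp add: sum_distrib_left sum.distrib distrib_right mult.assoc)
qed

lemma tJ_expd:
  assumes E: "fun_subspace E" and ipb: "bilin_on E ip" and onb: "orthonormal_basis E ip B"
    and c: "\<forall>b\<in>B. c b \<in> S"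
  shows "tensor_J S B J1 (expd B c) = expd B (\<lambda>\<beta>. J1 (c \<beta>))"
proof -
  define c' where "c' = (SOME c'. (\<forall>b\<in>B. c' b \<in> S) \<and> expd B c = (\<lambda>z. \<Sum>b\<in>B. prodf (c' b) b z))"
  have "(\<forall>b\<in>B. c' b \<in> S) \<and> expd B c = (\<lambda>z. \<Sum>b\<in>B. prodf (c' b) b z)"
    unfolding c'_def by (rule someI[where x=c]) (use c in \<open>simp add: expd_def\<close>)
  then have "expd B c = expd B c'" by (simp add: expd_def)
  then have eq: "\<forall>b\<in>B. c b = c' b" using expd_unique[OF E ipb onb] by blast
  have "tensor_J S B J1 (expd B c) = expd B (\<lambda>\<beta>. J1 (c' \<beta>))"
    unfolding tensor_J_def Let_def by (simp add: expd_def c'_def)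
  also have "\<dots> = expd B (\<lambda>\<beta>. J1 (c \<beta>))"
    unfolding expd_def using eq by (intro ext sum.cong) auto
  finally show ?thesis .
qed

lemma TS_sub:
  assumes S: "fun_subspace S" and onb: "orthonormal_basis E ip B"
  shows "fun_subspace (tensor_space S E)"
  unfolding fun_subspace_def
proof (intro conjI ballI allI)
  show "(\<lambda>_. 0) \<in> tensor_space S E" unfolding tensor_space_def
    by (intro CollectI exI[where x="{}"]) simp
next
  fix f g a b assume f: "f \<in> tensor_space S E" and g: "g \<in> tensor_space S E"
  obtain c where c: "\<forall>b\<in>B. c b \<in> S" "f = expd B c" using expd_exists[OF S onb f] by blast
  obtain d where d: "\<forall>b\<in>B. d b \<in> S" "g = expd B d" using expd_exists[OF S onb g] by blast
  have "\<forall>\<beta>\<in>B. lcomb a (c \<beta>) b (d \<beta>) \<in> S" using S c d by (simp add: fun_subspace_def)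
  then show "lcomb a f b g \<in> tensor_space S E"
    using c d expd_lcomb[where a=a and c=c and b=b and d=d and B=B] expd_in[OF onb, where c="\<lambda>\<beta>. lcomb a (c \<beta>) b (d \<beta>)" and S=S] by simp
qed

lemma w_expd:
  assumes S: "fun_subspace S" and E: "fun_subspace E" and onb: "orthonormal_basis E ip B"
    and w_skew: "skew_form_on (tensor_space S E) w"
    and w_prod: "\<forall>f\<in>S. \<forall>h\<in>S. \<forall>F\<in>E. \<forall>H\<in>E.
                   w (prodf f F) (prodf h H) = W f h * ip F H"
    and c: "\<forall>b\<in>B. c b \<in> S" and d: "\<forall>b\<in>B. d b \<in> S"
  shows "w (expd B c) (expd B d) = (\<Sum>b\<in>B. W (c b) (d b))"
proof -
  have fin: "finite B" and BE: "B \<subseteq> E" and on: "\<forall>a\<in>B. \<forall>b\<in>B. ip a b = (if a = b then 1 else 0)"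
    using onb by (auto simp: orthonormal_basis_def)
  have TS: "fun_subspace (tensor_space S E)" by (rule TS_sub[OF S onb])
  have wb: "bilin_on (tensor_space S E) w" using w_skew by (simp add: skew_form_on_def)
  have pin: "\<And>c. \<forall>b\<in>B. c b \<in> S \<Longrightarrow> \<forall>b\<in>B. prodf (c b) b \<in> tensor_space S E"
  proof (intro ballI)
    fix c :: "('b \<Rightarrow> real) \<Rightarrow> 'a \<Rightarrow> real" and b assume c: "\<forall>b\<in>B. c b \<in> S" and b: "b \<in> B"
    have "prodf (c b) b = (\<lambda>z. \<Sum>i\<in>{0::nat}. prodf (c b) b z)" by simp
    moreover have "b \<in> E" "c b \<in> S" using c b BE by auto
    ultimately show "prodf (c b) b \<in> tensor_space S E"
      unfolding tensor_space_def
      by (intro CollectI exI[where x="{0::nat}"] exI[where x="\<lambda>_. c b"] exI[where x="\<lambda>_. b"]) simp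
  qed
  have ex: "\<And>c. expd B c = (\<lambda>z. \<Sum>b\<in>B. 1 * prodf (c b) b z)" by (simp add: expd_def)
  have "w (expd B c) (expd B d) = (\<Sum>b\<in>B. 1 * w (prodf (c b) b) (expd B d))"
    unfolding ex[of c] by (rule bilin_sum_left[OF TS wb fin]) (use pin[OF c] expd_in[OF onb d] ex[of d] in auto)
  also have "\<dots> = (\<Sum>b\<in>B. \<Sum>b'\<in>B. 1 * w (prodf (c b) b) (prodf (d b') b'))"
  proof (rule sum.cong[OF refl])
    fix b assume b: "b \<in> B"
    have "w (prodf (c b) b) (\<lambda>z. \<Sum>b'\<in>B. 1 * prodf (d b') b' z) = (\<Sum>b'\<in>B. 1 * w (prodf (c b) b) (prodf (d b') b'))"
      by (rule bilin_sum_right[OF TS wb fin]) (use pin[OF c] pin[OF d] b in auto)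
    then show "1 * w (prodf (c b) b) (expd B d) = (\<Sum>b'\<in>B. 1 * w (prodf (c b) b) (prodf (d b') b'))"
      using ex[of d] by simp
  qed
  also have "\<dots> = (\<Sum>b\<in>B. \<Sum>b'\<in>B. if b' = b then W (c b) (d b) else 0)"
    using w_prod c d BE on by (intro sum.cong refl) (auto simp: subset_iff)
  also have "\<dots> = (\<Sum>b\<in>B. W (c b) (d b))" using fin by simp
  finally show ?thesis .
qed

theorem theorem2:
  fixes S :: "('p \<Rightarrow> real) set"
    and E :: "('q \<Rightarrow> real) set"
    and W :: "('p \<Rightarrow> real) \<Rightarrow> ('p \<Rightarrow> real) \<Rightarrow> real"
    and ip :: "('q \<Rightarrow> real) \<Rightarrow> ('q \<Rightarrow> real) \<Rightarrow> real"
    and w :: "('p \<times> 'q \<Rightarrow> real) \<Rightarrow> ('p \<times> 'q \<Rightarrow> real) \<Rightarrow> real"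
    and B :: "('q \<Rightarrow> real) set"
    and J1 :: "('p \<Rightarrow> real) \<Rightarrow> ('p \<Rightarrow> real)"
  assumes S_sub: "fun_subspace S"
    and E_sub: "fun_subspace E"
    and W_skew: "skew_form_on S W"
    and ip_bilin: "bilin_on E ip"
    and ip_sym: "\<forall>F\<in>E. \<forall>G\<in>E. ip F G = ip G F"
    and ip_pos: "\<forall>F\<in>E. F \<noteq> (\<lambda>_. 0) \<longrightarrow> ip F F > 0"
    and B_onb: "orthonormal_basis E ip B"
    and w_skew: "skew_form_on (tensor_space S E) w"
    and w_prod: "\<forall>f\<in>S. \<forall>h\<in>S. \<forall>F\<in>E. \<forall>H\<in>E.
                   w (prodf f F) (prodf h H) = W f h * ip F H"
    and J1_cs: "complex_structure_on S J1"
    and J1_pos: "positive_wrt S W J1"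
  shows "complex_structure_on (tensor_space S E) (tensor_J S B J1)
       \<and> positive_wrt (tensor_space S E) w (tensor_J S B J1)
       \<and> (\<forall>T::'q \<Rightarrow> 'q. bij T
            \<and> (\<forall>F\<in>E. F \<circ> inv T \<in> E)
            \<and> (\<forall>F\<in>E. \<forall>G\<in>E. ip (F \<circ> inv T) (G \<circ> inv T) = ip F G)
            \<longrightarrow> (\<forall>\<Phi>\<in>tensor_space S E.
                   tensor_J S B J1 (act2 T \<Phi>) = act2 T (tensor_J S B J1 \<Phi>)))"
proof -
  let ?TS = "tensor_space S E" and ?J = "tensor_J S B J1"
  have fin: "finite B" and BE: "B \<subseteq> E" and on: "\<forall>a\<in>B. \<forall>b\<in>B. ip a b = (if a = b then 1 else 0)"
    and span: "\<forall>F\<in>E. \<exists>c. F = (\<lambda>y. \<Sum>b\<in>B. c b * b y)"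
    using B_onb by (auto simp: orthonormal_basis_def)
  have J1lin: "lin_on S J1" and J1S: "\<forall>f\<in>S. J1 f \<in> S \<and> J1 (J1 f) = (\<lambda>x. - f x)"
    using J1_cs by (auto simp: complex_structure_on_def)
  have J1inv: "\<forall>f\<in>S. \<forall>g\<in>S. W (J1 f) (J1 g) = W f g" and J1p: "\<forall>f\<in>S. f \<noteq> (\<lambda>_. 0) \<longrightarrow> W f (J1 f) > 0"
    using J1_pos by (auto simp: positive_wrt_def)
  have Wb: "bilin_on S W" using W_skew by (simp add: skew_form_on_def)
  note ex = expd_exists[OF S_sub B_onb]
  note tJ = tJ_expd[OF E_sub ip_bilin B_onb]
  note wE = w_expd[OF S_sub E_sub B_onb w_skew w_prod]
  have z0: "(\<lambda>_. 0) \<in> S" using S_sub by (simp add: fun_subspace_def)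
  have J10: "J1 (\<lambda>_. 0) = (\<lambda>_. 0)" using lin_sum[OF S_sub J1lin, of "{}"] by simp
  have W00: "W (\<lambda>_. 0) (\<lambda>_. 0) = 0" using bilin_sum_left[OF S_sub Wb, of "{}" _ "\<lambda>_. 0"] z0 by simp
  have part1: "complex_structure_on ?TS ?J"
    unfolding complex_structure_on_def lin_on_def
  proof (intro conjI ballI allI)
    fix \<Phi> \<Psi> a b assume P: "\<Phi> \<in> ?TS" and Q: "\<Psi> \<in> ?TS"
    obtain c where c: "\<forall>b\<in>B. c b \<in> S" "\<Phi> = expd B c" using ex[OF P] by blast
    obtain d where d: "\<forall>b\<in>B. d b \<in> S" "\<Psi> = expd B d" using ex[OF Q] by blast
    have cd: "\<forall>\<beta>\<in>B. lcomb a (c \<beta>) b (d \<beta>) \<in> S" using S_sub c d by (simp add: fun_subspace_def)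
    have "?J (lcomb a \<Phi> b \<Psi>) = ?J (expd B (\<lambda>\<beta>. lcomb a (c \<beta>) b (d \<beta>)))"
      using c d expd_lcomb by metis
    also have "\<dots> = expd B (\<lambda>\<beta>. J1 (lcomb a (c \<beta>) b (d \<beta>)))" by (rule tJ[OF cd])
    also have "\<dots> = expd B (\<lambda>\<beta>. lcomb a (J1 (c \<beta>)) b (J1 (d \<beta>)))"
      unfolding expd_def using J1lin c d unfolding lin_on_def by (intro ext sum.cong refl) auto
    also have "\<dots> = lcomb a (expd B (\<lambda>\<beta>. J1 (c \<beta>))) b (expd B (\<lambda>\<beta>. J1 (d \<beta>)))"
      by (rule expd_lcomb[symmetric])
    also have "\<dots> = lcomb a (?J \<Phi>) b (?J \<Psi>)" using tJ[OF c(1)] tJ[OF d(1)] c d by simp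
    finally show "?J (lcomb a \<Phi> b \<Psi>) = lcomb a (?J \<Phi>) b (?J \<Psi>)" .
  next
    fix \<Phi> assume P: "\<Phi> \<in> ?TS"
    obtain c where c: "\<forall>b\<in>B. c b \<in> S" "\<Phi> = expd B c" using ex[OF P] by blast
    have Jc: "\<forall>\<beta>\<in>B. J1 (c \<beta>) \<in> S" using J1S c by auto
    show "?J \<Phi> \<in> ?TS" using tJ[OF c(1)] c(2) expd_in[OF B_onb Jc] by simp
    have "?J (?J \<Phi>) = expd B (\<lambda>\<beta>. J1 (J1 (c \<beta>)))" using tJ[OF c(1)] tJ[OF Jc] c(2) by simp
    also have "\<dots> = expd B (\<lambda>\<beta> x. - c \<beta> x)"
      unfolding expd_def using J1S c by (intro ext sum.cong refl) auto
    also have "\<dots> = (\<lambda>z. - \<Phi> z)"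
      unfolding c(2) expd_def prodf_def by (auto simp: sum_negf split: prod.splits)
    finally show "?J (?J \<Phi>) = (\<lambda>z. - \<Phi> z)" .
  qed
  have part2: "positive_wrt ?TS w ?J"
    unfolding positive_wrt_def
  proof (intro conjI ballI impI)
    fix \<Phi> \<Psi> assume P: "\<Phi> \<in> ?TS" and Q: "\<Psi> \<in> ?TS"
    obtain c where c: "\<forall>b\<in>B. c b \<in> S" "\<Phi> = expd B c" using ex[OF P] by blast
    obtain d where d: "\<forall>b\<in>B. d b \<in> S" "\<Psi> = expd B d" using ex[OF Q] by blast
    have Jc: "\<forall>\<beta>\<in>B. J1 (c \<beta>) \<in> S" using J1S c by auto
    have Jd: "\<forall>\<beta>\<in>B. J1 (d \<beta>) \<in> S" using J1S d by auto
    have "w (?J \<Phi>) (?J \<Psi>) = (\<Sum>\<beta>\<in>B. W (J1 (c \<beta>)) (J1 (d \<beta>)))"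
      using tJ[OF c(1)] tJ[OF d(1)] c(2) d(2) wE[OF Jc Jd] by simp
    also have "\<dots> = (\<Sum>\<beta>\<in>B. W (c \<beta>) (d \<beta>))" using J1inv c d by (intro sum.cong refl) auto
    also have "\<dots> = w \<Phi> \<Psi>" using wE[OF c(1) d(1)] c d by simp
    finally show "w (?J \<Phi>) (?J \<Psi>) = w \<Phi> \<Psi>" .
  next
    fix \<Phi> assume P: "\<Phi> \<in> ?TS" and nz: "\<Phi> \<noteq> (\<lambda>_. 0)"
    obtain c where c: "\<forall>b\<in>B. c b \<in> S" "\<Phi> = expd B c" using ex[OF P] by blast
    have Jc: "\<forall>\<beta>\<in>B. J1 (c \<beta>) \<in> S" using J1S c by auto
    have "\<exists>\<beta>\<in>B. c \<beta> \<noteq> (\<lambda>_. 0)"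
    proof (rule ccontr)
      assume "\<not> ?thesis"
      then have "\<Phi> = (\<lambda>_. 0)" unfolding c(2) expd_def prodf_def by (auto split: prod.splits)
      with nz show False by simp
    qed
    then obtain \<beta>0 where b0: "\<beta>0 \<in> B" "c \<beta>0 \<noteq> (\<lambda>_. 0)" by blast
    have ge: "\<forall>\<beta>\<in>B. 0 \<le> W (c \<beta>) (J1 (c \<beta>))"
    proof
      fix \<beta> assume "\<beta> \<in> B"
      show "0 \<le> W (c \<beta>) (J1 (c \<beta>))"
      proof (cases "c \<beta> = (\<lambda>_. 0)")
        case True then show ?thesis using J10 W00 by simp
      next
        case False then show ?thesis using J1p c \<open>\<beta> \<in> B\<close> by (simp add: less_imp_le)
      qed
    qed
    have "0 < (\<Sum>\<beta>\<in>B. W (c \<beta>) (J1 (c \<beta>)))"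
      by (rule sum_pos2[OF fin b0(1)]) (use J1p c b0 ge in auto)
    also have "\<dots> = w \<Phi> (?J \<Phi>)" using wE[OF c(1) Jc] tJ[OF c(1)] c(2) by simp
    finally show "w \<Phi> (?J \<Phi>) > 0" .
  qed
  have part3: "\<forall>T::'q \<Rightarrow> 'q. bij T
            \<and> (\<forall>F\<in>E. F \<circ> inv T \<in> E)
            \<and> (\<forall>F\<in>E. \<forall>G\<in>E. ip (F \<circ> inv T) (G \<circ> inv T) = ip F G)
            \<longrightarrow> (\<forall>\<Phi>\<in>tensor_space S E.
                   tensor_J S B J1 (act2 T \<Phi>) = act2 T (tensor_J S B J1 \<Phi>))"
  proof (intro allI impI ballI)
    fix T :: "'q \<Rightarrow> 'q" and \<Phi>
    assume TA: "bij T \<and> (\<forall>F\<in>E. F \<circ> inv T \<in> E) \<and> (\<forall>F\<in>E. \<forall>G\<in>E. ip (F \<circ> inv T) (G \<circ> inv T) = ip F G)"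
      and P: "\<Phi> \<in> ?TS"
    obtain c where c: "\<forall>b\<in>B. c b \<in> S" "\<Phi> = expd B c" using ex[OF P] by blast
    have Jc: "\<forall>\<beta>\<in>B. J1 (c \<beta>) \<in> S" using J1S c by auto
    have "\<forall>\<beta>\<in>B. \<exists>m. \<beta> \<circ> inv T = (\<lambda>y. \<Sum>b\<in>B. m b * b y)"
      using TA BE span by blast
    then obtain M where M: "\<forall>\<beta>\<in>B. \<beta> \<circ> inv T = (\<lambda>y. \<Sum>b\<in>B. M \<beta> b * b y)" by metis
    have act: "act2 T (expd B e) = expd B (\<lambda>b' x. \<Sum>\<beta>\<in>B. M \<beta> b' * e \<beta> x)" for e :: "('q \<Rightarrow> real) \<Rightarrow> 'p \<Rightarrow> real"
    proof
      fix z :: "'p \<times> 'q"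
      obtain x y where z: "z = (x,y)" by (cases z)
      have "act2 T (expd B e) z = (\<Sum>\<beta>\<in>B. e \<beta> x * (\<beta> \<circ> inv T) y)"
        by (simp add: act2_def z expd_def prodf_def)
      also have "\<dots> = (\<Sum>\<beta>\<in>B. e \<beta> x * (\<Sum>b\<in>B. M \<beta> b * b y))"
        using M by (intro sum.cong refl) auto
      also have "\<dots> = (\<Sum>\<beta>\<in>B. \<Sum>b\<in>B. M \<beta> b * e \<beta> x * b y)"
        by (simp add: sum_distrib_left mult.commute mult.left_commute)
      also have "\<dots> = (\<Sum>b\<in>B. \<Sum>\<beta>\<in>B. M \<beta> b * e \<beta> x * b y)"
        by (rule sum.swap)
      also have "\<dots> = expd B (\<lambda>b' x. \<Sum>\<beta>\<in>B. M \<beta> b' * e \<beta> x) z"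
        by (simp add: expd_def z prodf_def sum_distrib_right)
      finally show "act2 T (expd B e) z = expd B (\<lambda>b' x. \<Sum>\<beta>\<in>B. M \<beta> b' * e \<beta> x) z" .
    qed
    have cS: "\<forall>b'\<in>B. (\<lambda>x. \<Sum>\<beta>\<in>B. M \<beta> b' * c \<beta> x) \<in> S"
      using sum_in[OF S_sub fin] c by auto
    have "?J (act2 T \<Phi>) = expd B (\<lambda>b'. J1 (\<lambda>x. \<Sum>\<beta>\<in>B. M \<beta> b' * c \<beta> x))"
      using act[of c] c(2) tJ[OF cS] by simp
    also have "\<dots> = expd B (\<lambda>b' x. \<Sum>\<beta>\<in>B. M \<beta> b' * J1 (c \<beta>) x)"
      using lin_sum[OF S_sub J1lin fin] c(1) by simp
    also have "\<dots> = act2 T (?J \<Phi>)"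
      using act[of "\<lambda>\<beta>. J1 (c \<beta>)"] c(2) tJ[OF c(1)] by simp
    finally show "?J (act2 T \<Phi>) = act2 T (?J \<Phi>)" .
  qed
  show ?thesis using part1 part2 part3 by blast
qed

end
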